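(* For every integer $n\ge 2$, the $n$-abomination $\mathbb{X}_n$ is $(n+1)$-colorable.
   Context: $\mathbb{N}=\{0,1,2,\dots\}$. Fix an integer $n\ge 2$ and put $N=2^{n+1}-1$. Let $T_n$ be the set of triples $\langle k_1,k_2,k_3\rangle$ of pairwise distinct natural numbers $\le N$, with a fixed enumeration $T_n=\{s_0,\dots,s_t\}$. Let $U_n$ be a set of pairwise distinct elements $a_m,b_m$ ($m\in\mathbb{N}$) and $c_{m,k},d_{m,k},e^a_{m,k},e^b_{m,k}$ ($m\in\mathbb{N}$, $0\le k\le N$). Define $x\prec y$ on $U_n$ iff one of: (1) $x=a_m$ and $y\in\{c_{m,k_1},c_{m,k_2}\}$, where $s_j=\langle k_1,k_2,k_3\rangle$ with $j\equiv m \bmod (t+1)$; (2) $x=b_m$ and $y\in\{c_{m,k_1},c_{m,k_3}\}$, with $s_j$ as in (1); (3) $m\ge1$, $x=c_{m,k}$, and either $y=e^a_{m-1,j}$ with $j\ne k$, or $y=e^b_{m-1,i}$ for any $i\le N$; (4) $x=d_{m,k}$ and $y=c_{m,j}$ with $j\neq k$; (5) $x=e^a_{m,k}$ and either $y=a_m$ or $y=d_{m,j}$ with $j\ne k$; (6) $x=e^b_{m,k}$ and either $y=b_m$ or $y=d_{m,j}$ with $j\ne k$. Let $\le$ be the reflexive transitive closure of $\prec$. The $n$-abomination $\mathbb{X}_n$ is the poset $U_n\cup\{\bot\}$ where $\bot$ is a new least element, with the topology in which $U$ is open iff $\bot\notin U$ or $U$ is cofinite; it is an Esakia space. An E-partition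 on an Esakia space $\mathbb{X}$ is an equivalence relation $R$ on $X$ such that (a) if $\langle x,y\rangle\in R$ and $x\le z$ then there is $w\ge y$ with $\langle z,w\rangle\in R$; (b) if $\langle x,y\rangle\notin R$ there is a clopen union of $R$-classes containing $x$ but not $y$. For $p\in\mathbb{N}$, $\mathbb{C}_p=\{0,1\}^p$ ordered componentwise. A weak $p$-coloring of $\mathbb{X}$ is an order-preserving map $f\colon X\to\{0,1\}^p$ with $f^{-1}(\vec c)$ clopen for all $\vec c$; it is a $p$-coloring if every E-partition on $\mathbb{X}$ other than the identity relates two elements of distinct color. $\mathbb{X}$ is $p$-colorable if it admits a $p$-coloring. *)

theory Defs
  imports Main
begin

text \<open>Elements of the n-abomination: Bot is the added least element;
  the remaining constructors are the elements of U_n.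
  C m k, D m k, EA m k, EB m k stand for c_{m,k}, d_{m,k}, e^a_{m,k}, e^b_{m,k}.\<close>

datatype elt = Bot | A nat | B nat | C nat nat | D nat nat | EA nat nat | EB nat nat

definition bigN :: "nat \<Rightarrow> nat" where
  "bigN n = 2 ^ (n + 1) - 1"

definition triples :: "nat \<Rightarrow> (nat \<times> nat \<times> nat) set" where
  "triples n = {(k1, k2, k3). k1 \<le> bigN n \<and> k2 \<le> bigN n \<and> k3 \<le> bigN n
      \<and> k1 \<noteq> k2 \<and> k1 \<noteq> k3 \<and> k2 \<noteq> k3}"

definition enumeration :: "nat \<Rightarrow> (nat \<Rightarrow> nat \<times> nat \<times> nat) \<Rightarrow> bool" where
  "enumeration n s \<longleftrightarrow> bij_betw s {..< card (triples n)} (triples n)"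

definition Uset :: "nat \<Rightarrow> elt set" where
  "Uset n = range A \<union> range B
     \<union> {C m k | m k. k \<le> bigN n} \<union> {D m k | m k. k \<le> bigN n}
     \<union> {EA m k | m k. k \<le> bigN n} \<union> {EB m k | m k. k \<le> bigN n}"

definition Xset :: "nat \<Rightarrow> elt set" where
  "Xset n = insert Bot (Uset n)"

definition prec :: "nat \<Rightarrow> (nat \<Rightarrow> nat \<times> nat \<times> nat) \<Rightarrow> elt \<Rightarrow> elt \<Rightarrow> bool" where
  "prec n s x y \<longleftrightarrow> x \<in> Uset n \<and> y \<in> Uset n \<and>
    ((\<exists>m k1 k2 k3. s (m mod card (triples n)) = (k1, k2, k3) \<and>
        x = A m \<and> (y = C m k1 \<or> y = C m k2))
   \<or> (\<exists>m k1 k2 k3. s (m mod card (triples n)) = (k1, k2, k3) \<and>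
        x = B m \<and> (y = C m k1 \<or> y = C m k3))
   \<or> (\<exists>m k. m \<ge> 1 \<and> x = C m k \<and>
        ((\<exists>j. j \<noteq> k \<and> y = EA (m - 1) j) \<or> (\<exists>i. i \<le> bigN n \<and> y = EB (m - 1) i)))
   \<or> (\<exists>m k j. x = D m k \<and> j \<noteq> k \<and> y = C m j)
   \<or> (\<exists>m k. x = EA m k \<and> (y = A m \<or> (\<exists>j. j \<noteq> k \<and> y = D m j)))
   \<or> (\<exists>m k. x = EB m k \<and> (y = B m \<or> (\<exists>j. j \<noteq> k \<and> y = D m j))))"

definition leq :: "nat \<Rightarrow> (nat \<Rightarrow> nat \<times> nat \<times> nat) \<Rightarrow> elt \<Rightarrow> elt \<Rightarrow> bool" where
  "leq n s x y \<longleftrightarrow> x \<in> Xset n \<and> y \<in> Xset n \<and>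
     (x = Bot \<or> (x, y) \<in> {(u, v). prec n s u v}\<^sup>*)"

definition openX :: "nat \<Rightarrow> elt set \<Rightarrow> bool" where
  "openX n U \<longleftrightarrow> U \<subseteq> Xset n \<and> (Bot \<notin> U \<or> finite (Xset n - U))"

definition clopenX :: "nat \<Rightarrow> elt set \<Rightarrow> bool" where
  "clopenX n U \<longleftrightarrow> openX n U \<and> openX n (Xset n - U)"

definition E_partition :: "nat \<Rightarrow> (nat \<Rightarrow> nat \<times> nat \<times> nat) \<Rightarrow> elt rel \<Rightarrow> bool" where
  "E_partition n s R \<longleftrightarrow> equiv (Xset n) R
    \<and> (\<forall>x y z. (x, y) \<in> R \<and> leq n s x z \<longrightarrow> (\<exists>w. leq n s y w \<and> (z, w) \<in> R))
    \<and> (\<forall>x \<in> Xset n. \<forall>y \<in> Xset n. (x, y) \<notin> R \<longrightarrow>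
         (\<exists>U. clopenX n U \<and> (\<forall>u \<in> U. \<forall>v. (u, v) \<in> R \<longrightarrow> v \<in> U) \<and> x \<in> U \<and> y \<notin> U))"

text \<open>C_p = {0,1}^p, represented as boolean lists of length p (False = 0, True = 1),
  ordered componentwise.\<close>
definition cube :: "nat \<Rightarrow> bool list set" where
  "cube p = {c. length c = p}"

definition cube_le :: "bool list \<Rightarrow> bool list \<Rightarrow> bool" where
  "cube_le c d \<longleftrightarrow> list_all2 (\<le>) c d"

definition weak_coloring :: "nat \<Rightarrow> (nat \<Rightarrow> nat \<times> nat \<times> nat) \<Rightarrow> nat \<Rightarrow> (elt \<Rightarrow> bool list) \<Rightarrow> bool" where
  "weak_coloring n s p f \<longleftrightarrow> (\<forall>x \<in> Xset n. f x \<in> cube p)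
    \<and> (\<forall>x y. leq n s x y \<longrightarrow> cube_le (f x) (f y))
    \<and> (\<forall>c \<in> cube p. clopenX n {x \<in> Xset n. f x = c})"

definition coloring :: "nat \<Rightarrow> (nat \<Rightarrow> nat \<times> nat \<times> nat) \<Rightarrow> nat \<Rightarrow> (elt \<Rightarrow> bool list) \<Rightarrow> bool" where
  "coloring n s p f \<longleftrightarrow> weak_coloring n s p f
    \<and> (\<forall>R. E_partition n s R \<and> R \<noteq> Id_on (Xset n) \<longrightarrow> (\<exists>x y. (x, y) \<in> R \<and> f x \<noteq> f y))"

definition colorable :: "nat \<Rightarrow> (nat \<Rightarrow> nat \<times> nat \<times> nat) \<Rightarrow> nat \<Rightarrow> bool" where
  "colorable n s p \<longleftrightarrow> (\<exists>f. coloring n s p f)"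

end

theory Submission imports Defs begin

fun rk :: "elt \<Rightarrow> nat" where
  "rk Bot = 0"
| "rk (A m) = 3*m+1"
| "rk (B m) = 3*m+1"
| "rk (D m k) = 3*m+1"
| "rk (C m k) = 3*m"
| "rk (EA m k) = 3*m+2"
| "rk (EB m k) = 3*m+2"

abbreviation PP :: "nat \<Rightarrow> (nat \<Rightarrow> nat \<times> nat \<times> nat) \<Rightarrow> elt rel" where
  "PP n s \<equiv> {(u, v). prec n s u v}"

lemma U_simps[simp]:
  "Bot \<notin> Uset n" "A m \<in> Uset n" "B m \<in> Uset n"
  "C m k \<in> Uset n \<longleftrightarrow> k \<le> bigN n" "D m k \<in> Uset n \<longleftrightarrow> k \<le> bigN n"
  "EA m k \<in> Uset n \<longleftrightarrow> k \<le> bigN n" "EB m k \<in> Uset n \<longleftrightarrow> k \<le> bigN n"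
  by (auto simp: Uset_def)

lemma X_iff: "x \<in> Xset n \<longleftrightarrow> x = Bot \<or> x \<in> Uset n"
  by (auto simp: Xset_def)

lemma prec_rk: "prec n s x y \<Longrightarrow> rk x = Suc (rk y)"
  unfolding prec_def by auto

lemma prec_U: "prec n s x y \<Longrightarrow> x \<in> Uset n \<and> y \<in> Uset n"
  unfolding prec_def by auto

lemma relpow_rk: "(x, y) \<in> PP n s ^^ k \<Longrightarrow> rk x = rk y + k"
proof (induction k arbitrary: y)
  case 0 then show ?case by simp
next
  case (Suc k)
  then obtain z where "(x, z) \<in> PP n s ^^ k" "prec n s z y" by auto
  with Suc.IH prec_rk show ?case by fastforce
qed

lemma rt_rk:
  assumes "(x, y) \<in> (PP n s)\<^sup>*"
  shows "rk y \<le> rk x" "rk x = rk y \<Longrightarrow> x = y" "rk x = Suc (rk y) \<Longrightarrow> prec n s x y"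
proof -
  obtain k where k: "(x, y) \<in> PP n s ^^ k" using rtrancl_imp_relpow[OF assms] by auto
  from relpow_rk[OF k] have r: "rk x = rk y + k" .
  show "rk y \<le> rk x" using r by simp
  show "rk x = rk y \<Longrightarrow> x = y" using r k by simp
  show "rk x = Suc (rk y) \<Longrightarrow> prec n s x y" using r k by simp
qed

lemma rt_U: "(x, y) \<in> (PP n s)\<^sup>* \<Longrightarrow> x \<in> Uset n \<Longrightarrow> y \<in> Uset n"
  by (induction rule: rtrancl_induct) (auto dest: prec_U)

lemma bigN_ge: "n \<ge> 2 \<Longrightarrow> bigN n \<ge> 7"
proof -
  assume "n \<ge> 2"
  then have "(2::nat)^3 \<le> 2^(n+1)" by (intro power_increasing) auto
  then show ?thesis by (simp add: bigN_def)
qed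

lemma triples_fin: "finite (triples n)"
proof -
  have "triples n \<subseteq> {..bigN n} \<times> {..bigN n} \<times> {..bigN n}"
    by (auto simp: triples_def)
  then show ?thesis by (rule finite_subset) auto
qed

lemma s_in:
  assumes "n \<ge> 2" "enumeration n s"
  shows "s (m mod card (triples n)) \<in> triples n"
proof -
  have "(0,1,2) \<in> triples n" using bigN_ge[OF assms(1)] by (auto simp: triples_def)
  then have "card (triples n) > 0" using triples_fin by (auto simp: card_gt_0_iff)
  then have "m mod card (triples n) \<in> {..< card (triples n)}" by simp
  then show ?thesis using assms(2) unfolding enumeration_def bij_betw_def by auto
qed



lemma pA1: "s (m mod card (triples n)) = (k1,k2,k3) \<Longrightarrow> k1 \<le> bigN n \<Longrightarrow> prec n s (A m) (C m k1)"
  unfolding prec_def by simp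
lemma pA2: "s (m mod card (triples n)) = (k1,k2,k3) \<Longrightarrow> k2 \<le> bigN n \<Longrightarrow> prec n s (A m) (C m k2)"
  unfolding prec_def by simp
lemma pB1: "s (m mod card (triples n)) = (k1,k2,k3) \<Longrightarrow> k1 \<le> bigN n \<Longrightarrow> prec n s (B m) (C m k1)"
  unfolding prec_def by simp
lemma pB3: "s (m mod card (triples n)) = (k1,k2,k3) \<Longrightarrow> k3 \<le> bigN n \<Longrightarrow> prec n s (B m) (C m k3)"
  unfolding prec_def by simp
lemma pCA: "m \<ge> 1 \<Longrightarrow> k \<le> bigN n \<Longrightarrow> j \<le> bigN n \<Longrightarrow> j \<noteq> k \<Longrightarrow> prec n s (C m k) (EA (m-1) j)"
  unfolding prec_def by simp
lemma pCB: "m \<ge> 1 \<Longrightarrow> k \<le> bigN n \<Longrightarrow> j \<le> bigN n \<Longrightarrow> prec n s (C m k) (EB (m-1) j)"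
  unfolding prec_def by simp
lemma pDC: "k \<le> bigN n \<Longrightarrow> j \<le> bigN n \<Longrightarrow> j \<noteq> k \<Longrightarrow> prec n s (D m k) (C m j)"
  unfolding prec_def by simp
lemma pEAA: "k \<le> bigN n \<Longrightarrow> prec n s (EA m k) (A m)"
  unfolding prec_def by simp
lemma pEAD: "k \<le> bigN n \<Longrightarrow> j \<le> bigN n \<Longrightarrow> j \<noteq> k \<Longrightarrow> prec n s (EA m k) (D m j)"
  unfolding prec_def by simp
lemma pEBB: "k \<le> bigN n \<Longrightarrow> prec n s (EB m k) (B m)"
  unfolding prec_def by simp
lemma pEBD: "k \<le> bigN n \<Longrightarrow> j \<le> bigN n \<Longrightarrow> j \<noteq> k \<Longrightarrow> prec n s (EB m k) (D m j)"
  unfolding prec_def by simp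


lemma nC0: "\<not> prec n s (C 0 k) y"
  unfolding prec_def by auto
lemma nB: "s (m mod card (triples n)) = (k1,k2,k3) \<Longrightarrow> j \<noteq> k1 \<Longrightarrow> j \<noteq> k3 \<Longrightarrow> \<not> prec n s (B m) (C m j)"
  unfolding prec_def by auto
lemma nA: "s (m mod card (triples n)) = (k1,k2,k3) \<Longrightarrow> j \<noteq> k1 \<Longrightarrow> j \<noteq> k2 \<Longrightarrow> \<not> prec n s (A m) (C m j)"
  unfolding prec_def by auto
lemma nCA: "\<not> prec n s (C m k) (EA (m-1) k)"
  unfolding prec_def by auto
lemma nDC: "\<not> prec n s (D m k) (C m k)"
  unfolding prec_def by auto
lemma nEAD: "\<not> prec n s (EA m k) (D m k)"
  unfolding prec_def by auto
lemma nEBD: "\<not> prec n s (EB m k) (D m k)"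
  unfolding prec_def by auto
lemma nEBA: "\<not> prec n s (EB m k) (A m')"
  unfolding prec_def by auto


lemma sA: assumes "n \<ge> 2" "enumeration n s"
  obtains k1 k2 k3 where "s (m mod card (triples n)) = (k1,k2,k3)" "k1 \<le> bigN n" "k2 \<le> bigN n"
    "k3 \<le> bigN n" "k1 \<noteq> k2" "k1 \<noteq> k3" "k2 \<noteq> k3"
  using s_in[OF assms, of m] unfolding triples_def by auto

lemma two_succ:
  assumes "n \<ge> 2" "enumeration n s" "x \<in> Uset n" "rk x \<ge> 1"
  shows "\<exists>z1 z2. z1 \<noteq> z2 \<and> prec n s x z1 \<and> prec n s x z2"
proof (cases x)
  case Bot then show ?thesis using assms by simp
next
  case (A m)
  obtain k1 k2 k3 where k: "s (m mod card (triples n)) = (k1,k2,k3)" "k1 \<le> bigN n" "k2 \<le> bigN n"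
    "k3 \<le> bigN n" "k1 \<noteq> k2" "k1 \<noteq> k3" "k2 \<noteq> k3" using sA[OF assms(1,2)] by blast
  have "prec n s x (C m k1)" unfolding A using pA1[of s m n k1 k2 k3] k by blast
  moreover have "prec n s x (C m k2)" unfolding A using pA2[of s m n k1 k2 k3] k by blast
  ultimately show ?thesis using k(5) by blast
next
  case (B m)
  obtain k1 k2 k3 where k: "s (m mod card (triples n)) = (k1,k2,k3)" "k1 \<le> bigN n" "k2 \<le> bigN n"
    "k3 \<le> bigN n" "k1 \<noteq> k2" "k1 \<noteq> k3" "k2 \<noteq> k3" using sA[OF assms(1,2)] by blast
  have "prec n s x (C m k1)" unfolding B using pB1[of s m n k1 k2 k3] k by blast
  moreover have "prec n s x (C m k3)" unfolding B using pB3[of s m n k1 k2 k3] k by blast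
  ultimately show ?thesis using k(6) by blast
next
  case (C m k)
  have N: "bigN n \<ge> 7" by (rule bigN_ge[OF assms(1)])
  have m: "m \<ge> 1" using assms(4) C by simp
  have kk: "k \<le> bigN n" using assms(3) C by simp
  have "prec n s (C m k) (EB (m-1) 0)" using pCB[of m k n 0 s] m kk by simp
  moreover have "prec n s (C m k) (EB (m-1) 1)" using pCB[of m k n 1 s] m kk N by simp
  moreover have "EB (m-1) 0 \<noteq> EB (m-1) 1" by simp
  ultimately show ?thesis using C by blast
next
  case (D m k)
  have N: "bigN n \<ge> 7" by (rule bigN_ge[OF assms(1)])
  have kk: "k \<le> bigN n" using assms(3) D by simp
  have "prec n s (D m k) (C m (if k = 0 then 1 else 0))" using pDC[of k n "if k = 0 then 1 else 0" s m] kk N by simp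
  moreover have "prec n s (D m k) (C m (if k = 2 then 1 else 2))" using pDC[of k n "if k = 2 then 1 else 2" s m] kk N by simp
  moreover have "C m (if k = 0 then 1 else 0) \<noteq> C m (if k = 2 then 1 else 2)" by simp
  ultimately show ?thesis using D by blast
next
  case (EA m k)
  have N: "bigN n \<ge> 7" by (rule bigN_ge[OF assms(1)])
  have kk: "k \<le> bigN n" using assms(3) EA by simp
  have "prec n s (EA m k) (A m)" using pEAA[of k n s m] kk by simp
  moreover have "prec n s (EA m k) (D m (if k = 0 then 1 else 0))" using pEAD[of k n "if k = 0 then 1 else 0" s m] kk N by simp
  ultimately show ?thesis using EA by blast
next
  case (EB m k)
  have N: "bigN n \<ge> 7" by (rule bigN_ge[OF assms(1)])
  have kk: "k \<le> bigN n" using assms(3) EB by simp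
  have "prec n s (EB m k) (B m)" using pEBB[of k n s m] kk by simp
  moreover have "prec n s (EB m k) (D m (if k = 0 then 1 else 0))" using pEBD[of k n "if k = 0 then 1 else 0" s m] kk N by simp
  ultimately show ?thesis using EB by blast
qed

lemma rk0: "x \<in> Uset n \<Longrightarrow> rk x = 0 \<Longrightarrow> \<exists>k. x = C 0 k"
  by (cases x) auto

lemma avoid3: "\<exists>j::nat. j \<le> 3 \<and> j \<noteq> a \<and> j \<noteq> b \<and> j \<noteq> c"
proof (rule ccontr)
  assume h: "\<not> ?thesis"
  have H: "\<And>j::nat. j \<le> 3 \<Longrightarrow> j \<in> {a,b,c}" using h by auto
  have "{0,1,2,3} \<subseteq> {a,b,c}" using H[of 0] H[of 1] H[of 2] H[of 3] by simp
  then have "card {0,1,2,3::nat} \<le> card {a,b,c}" by (intro card_mono) auto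
  also have "\<dots> \<le> 3" by (simp add: card_insert_if)
  finally show False by simp
qed


lemma dCC: "m \<ge> 1 \<Longrightarrow> k \<le> bigN n \<Longrightarrow> k' \<le> bigN n \<Longrightarrow> k \<noteq> k' \<Longrightarrow>
  \<exists>z. prec n s (C m k) z \<and> \<not> prec n s (C m k') z"
  using pCB pCA[of m k n k' s] nCA[of n s m k'] by blast

lemma dAB: assumes "n \<ge> 2" "enumeration n s"
  shows "\<exists>z. prec n s (A m) z \<and> \<not> prec n s (B m) z"
proof -
  obtain k1 k2 k3 where k: "s (m mod card (triples n)) = (k1,k2,k3)" "k1 \<le> bigN n" "k2 \<le> bigN n"
    "k3 \<le> bigN n" "k1 \<noteq> k2" "k1 \<noteq> k3" "k2 \<noteq> k3" using sA[OF assms(1,2)] by blast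
  have "prec n s (A m) (C m k2)" using pA2[of s m n k1 k2 k3] k by blast
  moreover have "\<not> prec n s (B m) (C m k2)" using nB[of s m n k1 k2 k3 k2] k by blast
  ultimately show ?thesis by blast
qed

lemma dAD: assumes "n \<ge> 2" "enumeration n s" "k \<le> bigN n"
  shows "\<exists>z. prec n s (D m k) z \<and> \<not> prec n s (A m) z"
proof -
  obtain k1 k2 k3 where k: "s (m mod card (triples n)) = (k1,k2,k3)" "k1 \<le> bigN n" "k2 \<le> bigN n"
    "k3 \<le> bigN n" "k1 \<noteq> k2" "k1 \<noteq> k3" "k2 \<noteq> k3" using sA[OF assms(1,2)] by blast
  obtain j where j: "j \<le> 3" "j \<noteq> k" "j \<noteq> k1" "j \<noteq> k2" using avoid3 by blast
  have N: "bigN n \<ge> 7" by (rule bigN_ge[OF assms(1)])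
  have "prec n s (D m k) (C m j)" using pDC[of k n j s m] j N assms(3) by simp
  moreover have "\<not> prec n s (A m) (C m j)" using nA[of s m n k1 k2 k3 j] k j by blast
  ultimately show ?thesis by blast
qed

lemma dBD: assumes "n \<ge> 2" "enumeration n s" "k \<le> bigN n"
  shows "\<exists>z. prec n s (D m k) z \<and> \<not> prec n s (B m) z"
proof -
  obtain k1 k2 k3 where k: "s (m mod card (triples n)) = (k1,k2,k3)" "k1 \<le> bigN n" "k2 \<le> bigN n"
    "k3 \<le> bigN n" "k1 \<noteq> k2" "k1 \<noteq> k3" "k2 \<noteq> k3" using sA[OF assms(1,2)] by blast
  obtain j where j: "j \<le> 3" "j \<noteq> k" "j \<noteq> k1" "j \<noteq> k3" using avoid3 by blast
  have N: "bigN n \<ge> 7" by (rule bigN_ge[OF assms(1)])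
  have "prec n s (D m k) (C m j)" using pDC[of k n j s m] j N assms(3) by simp
  moreover have "\<not> prec n s (B m) (C m j)" using nB[of s m n k1 k2 k3 j] k j by blast
  ultimately show ?thesis by blast
qed

lemma dDD: "k \<le> bigN n \<Longrightarrow> k' \<le> bigN n \<Longrightarrow> k \<noteq> k' \<Longrightarrow>
  \<exists>z. prec n s (D m k) z \<and> \<not> prec n s (D m k') z"
  using pDC[of k n k' s m] nDC[of n s m k'] by blast

lemma dEAEA: "k \<le> bigN n \<Longrightarrow> k' \<le> bigN n \<Longrightarrow> k \<noteq> k' \<Longrightarrow>
  \<exists>z. prec n s (EA m k) z \<and> \<not> prec n s (EA m k') z"
  using pEAD[of k n k' s m] nEAD[of n s m k'] by blast

lemma dEBEB: "k \<le> bigN n \<Longrightarrow> k' \<le> bigN n \<Longrightarrow> k \<noteq> k' \<Longrightarrow>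
  \<exists>z. prec n s (EB m k) z \<and> \<not> prec n s (EB m k') z"
  using pEBD[of k n k' s m] nEBD[of n s m k'] by blast

lemma dEAEB: "k \<le> bigN n \<Longrightarrow>
  \<exists>z. prec n s (EA m k) z \<and> \<not> prec n s (EB m k') z"
  using pEAA[of k n s m] nEBA[of n s m k' m] by blast


lemma mism[simp]: "Suc (3*a) \<noteq> 3*b" "3*a \<noteq> Suc (3*b)" "Suc (Suc (3*a)) \<noteq> 3*b" "3*a \<noteq> Suc (Suc (3*b))"
  "3*a \<noteq> Suc (3*b) " "Suc (3*a) \<noteq> Suc (Suc (3*b))" "Suc (Suc (3*a)) \<noteq> Suc (3*b)"
  by presburger+

lemma dist_succ:
  assumes "n \<ge> 2" "enumeration n s" "x \<in> Uset n" "y \<in> Uset n" "x \<noteq> y" "rk x = rk y" "rk x \<ge> 1"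
  shows "\<exists>z. (prec n s x z \<and> \<not> prec n s y z) \<or> (prec n s y z \<and> \<not> prec n s x z)"
  using assms(3-)
  apply (cases x; cases y; simp)
  apply (use dAB[OF assms(1,2)] in blast)
  apply (use dAD[OF assms(1,2)] in blast)
  apply (use dAB[OF assms(1,2)] in blast)
  apply (use dBD[OF assms(1,2)] in blast)
  apply (use dCC[of _ _ n _ s, unfolded One_nat_def] in blast)
  apply (use dAD[OF assms(1,2)] in blast)
  apply (use dBD[OF assms(1,2)] in blast)
  apply (use dDD[of _ n _ s] in blast)
  apply (use dEAEA[of _ n _ s] in blast)
  apply (use dEAEB[of _ n s] in blast)
  apply (use dEAEB[of _ n s] in blast)
  apply (use dEBEB[of _ n _ s] in blast)
  done


lemma key:
  assumes "n \<ge> 2" "enumeration n s" "u \<in> Uset n" "v \<in> Uset n" "u \<noteq> v"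
    "\<forall>z. prec n s u z \<longrightarrow> (v, z) \<in> (PP n s)\<^sup>*" "rk u \<ge> 1"
  shows "rk v \<ge> rk u"
proof (rule ccontr)
  assume lt: "\<not> rk v \<ge> rk u"
  obtain z1 z2 where z: "z1 \<noteq> z2" "prec n s u z1" "prec n s u z2"
    using two_succ[OF assms(1,2,3,7)] by blast
  have r1: "(v, z1) \<in> (PP n s)\<^sup>*" "(v, z2) \<in> (PP n s)\<^sup>*" using assms(6) z by auto
  have "rk u = Suc (rk z1)" "rk u = Suc (rk z2)" using prec_rk[OF z(2)] prec_rk[OF z(3)] by auto
  moreover have "rk z1 \<le> rk v" "rk z2 \<le> rk v" using rt_rk(1) r1 by auto
  ultimately have "rk v = rk z1" "rk v = rk z2" using lt by auto
  then have "v = z1" "v = z2" using rt_rk(2) r1 by auto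
  then show False using z(1) by simp
qed

lemma sep:
  assumes "n \<ge> 2" "enumeration n s" "x \<in> Uset n" "y \<in> Uset n" "x \<noteq> y"
    "\<forall>z. prec n s x z \<longrightarrow> (y, z) \<in> (PP n s)\<^sup>*" "\<forall>z. prec n s y z \<longrightarrow> (x, z) \<in> (PP n s)\<^sup>*"
  shows "\<exists>k k'. x = C 0 k \<and> y = C 0 k'"
proof (cases "rk x = 0 \<and> rk y = 0")
  case True
  then show ?thesis using rk0 assms(3,4) by blast
next
  case False
  have ge: "rk x \<ge> 1 \<or> rk y \<ge> 1" using False by auto
  have eq: "rk x = rk y" and ge1: "rk x \<ge> 1"
  proof -
    have a: "rk x \<ge> 1 \<Longrightarrow> rk y \<ge> rk x" using key[OF assms(1,2,3,4,5,6)] by blast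
    have b: "rk y \<ge> 1 \<Longrightarrow> rk x \<ge> rk y" using key[OF assms(1,2,4,3) _ assms(7)] assms(5) by blast
    show "rk x = rk y" using a b ge by linarith
    show "rk x \<ge> 1" using a b ge by linarith
  qed
  obtain z where "(prec n s x z \<and> \<not> prec n s y z) \<or> (prec n s y z \<and> \<not> prec n s x z)"
    using dist_succ[OF assms(1-5) eq ge1] by blast
  then show ?thesis
  proof
    assume h: "prec n s x z \<and> \<not> prec n s y z"
    have "(y, z) \<in> (PP n s)\<^sup>*" using h assms(6) by blast
    moreover have "rk y = Suc (rk z)" using h prec_rk eq by metis
    ultimately have "prec n s y z" using rt_rk(3) by blast
    then show ?thesis using h by blast
  next
    assume h: "prec n s y z \<and> \<not> prec n s x z"
    have "(x, z) \<in> (PP n s)\<^sup>*" using h assms(7) by blast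
    moreover have "rk x = Suc (rk z)" using h prec_rk eq by metis
    ultimately have "prec n s x z" using rt_rk(3) by blast
    then show ?thesis using h by blast
  qed
qed


definition zc :: "nat \<Rightarrow> bool list" where "zc n = replicate (n+1) False"
definition bits :: "nat \<Rightarrow> nat \<Rightarrow> bool list" where "bits n k = map (bit k) [0..<n+1]"
definition col :: "nat \<Rightarrow> elt \<Rightarrow> bool list" where
  "col n x = (case x of C m k \<Rightarrow> if m = 0 then bits n k else zc n | _ \<Rightarrow> zc n)"

lemma bits_inj:
  assumes "k \<le> bigN n" "k' \<le> bigN n" "bits n k = bits n k'"
  shows "k = k'"
proof -
  have p: "(2::nat)^(n+1) \<ge> 1" by simp
  have "k < 2^(n+1)" "k' < 2^(n+1)" using assms(1,2) p unfolding bigN_def by linarith+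
  then have t: "take_bit (n+1) k = k" "take_bit (n+1) k' = k'" by (simp_all add: take_bit_nat_eq_self_iff)
  have bi: "bit k i = bit k' i" if "i < n+1" for i
  proof -
    have "bits n k ! i = bits n k' ! i" using assms(3) by simp
    then show ?thesis using that unfolding bits_def by (simp del: upt_Suc)
  qed
  have "\<And>i. bit (take_bit (n+1) k) i = bit (take_bit (n+1) k') i"
    using bi by (auto simp: bit_take_bit_iff)
  then have "take_bit (n+1) k = take_bit (n+1) k'" by (rule bit_eq_iff[THEN iffD2, rule_format])
  then show ?thesis using t by simp
qed

lemma col_len: "length (col n x) = n + 1"
  by (cases x) (auto simp: col_def zc_def bits_def)

lemma col_other: "(\<nexists>k. x = C 0 k) \<Longrightarrow> col n x = zc n"
  by (cases x) (auto simp: col_def)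

lemma col_C0: "col n (C 0 k) = bits n k"
  by (simp add: col_def)

lemma leC0: "(C 0 k, y) \<in> (PP n s)\<^sup>* \<Longrightarrow> y = C 0 k"
  using rt_rk[of "C 0 k" y n s] by auto

lemma cube_le_zc: "length ys = n + 1 \<Longrightarrow> cube_le (zc n) ys"
  unfolding cube_le_def zc_def by (simp add: list_all2_conv_all_nth del: replicate.simps)

lemma cube_le_refl: "cube_le c c"
  unfolding cube_le_def by (rule list_all2_refl) simp

lemma clopen_col: "clopenX n {x \<in> Xset n. col n x = c}"
proof -
  define F where "F = C 0 ` {..bigN n}"
  have fF: "finite F" unfolding F_def by simp
  have sub: "x \<in> F" if a1: "x \<in> Xset n" and a2: "col n x \<noteq> zc n" for x
  proof -
    obtain k where k: "x = C 0 k" using col_other a2 by blast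
    then have "k \<le> bigN n" using a1 by (simp add: X_iff)
    then show ?thesis unfolding F_def k by simp
  qed
  let ?U = "{x \<in> Xset n. col n x = c}"
  show ?thesis
  proof (cases "c = zc n")
    case True
    have "Xset n - ?U \<subseteq> F" using sub True by blast
    then have "finite (Xset n - ?U)" using fF finite_subset by blast
    moreover have "Bot \<notin> Xset n - ?U" using True by (simp add: col_def X_iff)
    ultimately show ?thesis unfolding clopenX_def openX_def by blast
  next
    case False
    have "?U \<subseteq> F" using sub False by blast
    then have "finite ?U" using fF finite_subset by blast
    moreover have "Xset n - (Xset n - ?U) = ?U" by blast
    moreover have "Bot \<notin> ?U" using False by (simp add: col_def)
    ultimately show ?thesis unfolding clopenX_def openX_def by auto
  qed
qed

lemma leq_rt: "leq n s x y \<Longrightarrow> x \<noteq> Bot \<Longrightarrow> (x, y) \<in> (PP n s)\<^sup>*"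
  unfolding leq_def by auto

lemma weak: "weak_coloring n s (n+1) (col n)"
  unfolding weak_coloring_def
proof (intro conjI ballI allI impI)
  fix x assume "x \<in> Xset n" then show "col n x \<in> cube (n+1)" by (simp add: cube_def col_len)
next
  fix c show "clopenX n {x \<in> Xset n. col n x = c}" by (rule clopen_col)
next
  fix x y assume h: "leq n s x y"
  show "cube_le (col n x) (col n y)"
  proof (cases "\<exists>k. x = C 0 k")
    case True
    then obtain k where k: "x = C 0 k" by blast
    then have "y = x" using leC0 leq_rt[OF h] by blast
    then show ?thesis by (simp add: cube_le_refl)
  next
    case False
    then show ?thesis using col_other cube_le_zc col_len by metis
  qed
qed


lemma rigid:
  assumes n2: "n \<ge> 2" and en: "enumeration n s" and EP: "E_partition n s R"
    and H: "\<forall>x y. (x, y) \<in> R \<longrightarrow> col n x = col n y"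
  shows "(x, y) \<in> R \<Longrightarrow> x \<noteq> Bot \<Longrightarrow> y \<noteq> Bot \<Longrightarrow> x = y"
proof (induction "rk x + rk y" arbitrary: x y rule: less_induct)
  case less
  have eqv: "equiv (Xset n) R" using EP unfolding E_partition_def by blast
  have RX: "R \<subseteq> Xset n \<times> Xset n" using eqv unfolding equiv_def refl_on_def by blast
  have sy: "(y, x) \<in> R" using eqv less.prems(1) unfolding equiv_def sym_def by blast
  have A: "\<forall>x y z. (x, y) \<in> R \<and> leq n s x z \<longrightarrow> (\<exists>w. leq n s y w \<and> (z, w) \<in> R)"
    using EP unfolding E_partition_def by blast
  have xU: "x \<in> Uset n" and yU: "y \<in> Uset n" using RX less.prems by (auto simp: X_iff)
  have step: "\<forall>z. prec n s u z \<longrightarrow> (v, z) \<in> (PP n s)\<^sup>*"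
    if uv: "(u, v) \<in> R" "u \<in> Uset n" "v \<in> Uset n" "rk u + rk v = rk x + rk y" for u v
  proof (intro allI impI)
    fix z assume pz: "prec n s u z"
    have zU: "z \<in> Uset n" using prec_U[OF pz] by blast
    have "leq n s u z" unfolding leq_def using uv(2) zU pz by (auto simp: X_iff)
    then obtain w where w: "leq n s v w" "(z, w) \<in> R" using A uv(1) by blast
    have "v \<noteq> Bot" using uv(3) U_simps(1) by metis
    then have vw: "(v, w) \<in> (PP n s)\<^sup>*" using leq_rt[OF w(1)] by auto
    have wU: "w \<in> Uset n" using rt_U[OF vw uv(3)] .
    have "rk z < rk u" using prec_rk[OF pz] by simp
    moreover have "rk w \<le> rk v" using rt_rk(1)[OF vw] .
    ultimately have "rk z + rk w < rk x + rk y" using uv(4) by linarith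
    moreover have "z \<noteq> Bot" "w \<noteq> Bot" using zU wU U_simps(1) by metis+
    ultimately show "(v, z) \<in> (PP n s)\<^sup>*" using less.hyps[OF _ w(2)] vw by auto
  qed
  show "x = y"
  proof (rule ccontr)
    assume ne: "x \<noteq> y"
    have s1: "\<forall>z. prec n s x z \<longrightarrow> (y, z) \<in> (PP n s)\<^sup>*" using step[OF less.prems(1) xU yU] by simp
    have s2: "\<forall>z. prec n s y z \<longrightarrow> (x, z) \<in> (PP n s)\<^sup>*" using step[OF sy yU xU] by simp
    obtain k k' where kk: "x = C 0 k" "y = C 0 k'" using sep[OF n2 en xU yU ne s1 s2] by blast
    have "col n x = col n y" using H less.prems(1) by blast
    then have "bits n k = bits n k'" using kk by (simp add: col_C0)
    moreover have "k \<le> bigN n" "k' \<le> bigN n" using xU yU kk by auto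
    ultimately have "k = k'" using bits_inj by blast
    then show False using ne kk by simp
  qed
qed

theorem mainTheorem6:
  fixes n :: nat and s :: "nat \<Rightarrow> nat \<times> nat \<times> nat"
  assumes "n \<ge> 2" and "enumeration n s"
  shows "colorable n s (n + 1)"
  unfolding colorable_def coloring_def
proof (intro exI[of _ "col n"] conjI allI impI)
  show "weak_coloring n s (n + 1) (col n)" by (rule weak)
next
  fix R assume h: "E_partition n s R \<and> R \<noteq> Id_on (Xset n)"
  show "\<exists>x y. (x, y) \<in> R \<and> col n x \<noteq> col n y"
  proof (rule ccontr)
    assume "\<not> ?thesis"
    then have H: "\<forall>x y. (x, y) \<in> R \<longrightarrow> col n x = col n y" by blast
    have EP: "E_partition n s R" using h by blast
    have eqv: "equiv (Xset n) R" using EP unfolding E_partition_def by blast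
    have RX: "R \<subseteq> Xset n \<times> Xset n" using eqv unfolding equiv_def refl_on_def by blast
    have rf: "Id_on (Xset n) \<subseteq> R" using eqv unfolding equiv_def refl_on_def by blast
    have A: "\<forall>x y z. (x, y) \<in> R \<and> leq n s x z \<longrightarrow> (\<exists>w. leq n s y w \<and> (z, w) \<in> R)"
      using EP unfolding E_partition_def by blast
    have rg: "\<And>x y. (x, y) \<in> R \<Longrightarrow> x \<noteq> Bot \<Longrightarrow> y \<noteq> Bot \<Longrightarrow> x = y"
      using rigid[OF assms EP H] by blast
    have bot: "y = Bot" if hb: "(Bot, y) \<in> R" for y
    proof (rule ccontr)
      assume yb: "y \<noteq> Bot"
      have yU: "y \<in> Uset n" using RX hb yb by (auto simp: X_iff)
      define z where "z = C (Suc (rk y)) 0"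
      have zX: "z \<in> Xset n" unfolding z_def by (simp add: X_iff)
      have "leq n s Bot z" unfolding leq_def using zX by (simp add: X_iff)
      then obtain w where w: "leq n s y w" "(z, w) \<in> R" using A hb by blast
      have vw: "(y, w) \<in> (PP n s)\<^sup>*" using leq_rt[OF w(1)] yb by auto
      have wU: "w \<in> Uset n" using rt_U[OF vw yU] .
      have "w \<noteq> Bot" using wU U_simps(1) by metis
      then have "z = w" using rg[OF w(2)] by (auto simp: z_def)
      then have "rk z \<le> rk y" using rt_rk(1)[OF vw] by simp
      then show False unfolding z_def by simp
    qed
    have "R \<subseteq> Id_on (Xset n)"
    proof
      fix p assume pR: "p \<in> R"
      obtain x y where p: "p = (x, y)" by (cases p)
      have xy: "(x, y) \<in> R" using pR p by simp
      have yx: "(y, x) \<in> R" using eqv xy unfolding equiv_def sym_def by blast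
      have "x = y"
      proof (cases "x = Bot \<or> y = Bot")
        case True
        then show ?thesis using bot xy yx by metis
      next
        case False
        then show ?thesis using rg xy by blast
      qed
      then show "p \<in> Id_on (Xset n)" using p RX xy by auto
    qed
    then have "R = Id_on (Xset n)" using rf by blast
    then show False using h by blast
  qed
qed

end
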